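(* Let $D$ be a directed graph (quiver) with vertex set $I$, $A=kD$ its path algebra, and let $r$ be any of $r_b,r_k,r_l,r_j$. Let $s,t\in I$ with $A_{st}\neq 0$. Then (i) $r(A_{st})=0$ if and only if $A_{ts}\neq 0$; (ii) $r(A_{st})=A_{st}$ if and only if $A_{ts}=0$.
   Context: $D$ may be infinite and may have multiple arrows and loops; $k$ is a field. The path algebra $A=kD=\bigoplus_{i,j\in I}A_{ij}$, where $A_{ij}$ is the $k$-span of all paths from $i$ to $j$ of length $\ge1$, together with the trivial path $e_{ii}$ when $i=j$; multiplication is concatenation (a path from $i$ to $j$ times a path from $j$ to $l$ is the concatenated path from $i$ to $l$, other products zero, $e_{ii}$ acting as identity on paths starting/ending at $i$). Thus $A_{ij}\neq 0$ iff there is a path from $i$ to $j$. $A$ is a generalized matrix algebra, and $A_{st}$ is regarded as a $\Gamma$-ring with $\Gamma=A_{ts}$ (ternary product via path multiplication); $r(A_{st})$ is its radical as a $\Gamma$-ring: $r_b$ Baer (prime) radical, $r_k$ nil radical, $r_l$ Levitzki radical, $r_j$ Jacobson radical (in the sense of Coppage–Luh), where e.g. $y\in A_{st}$ is right quasi-regular if for each $x\in A_{ts}$ there is $u\in A_{ts}A_{st}$ with $yxu+yx+u$... (standard Coppage–Luh definition). *)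

theory Defs
  imports Main "HOL-Library.Function_Algebras"
begin

text \<open>All Gamma-rings considered here live inside an ambient additive group 'a
equipped with an (associative) multiplication mul.\<close>

definition gtp :: "('a \<Rightarrow> 'a \<Rightarrow> 'a) \<Rightarrow> 'a \<Rightarrow> 'a \<Rightarrow> 'a \<Rightarrow> 'a" where
  "gtp mul x g y = mul (mul x g) y"

definition gideal :: "('a::ab_group_add \<Rightarrow> 'a \<Rightarrow> 'a) \<Rightarrow> 'a set \<Rightarrow> 'a set \<Rightarrow> 'a set \<Rightarrow> bool" where
  "gideal mul M G I \<longleftrightarrow> I \<subseteq> M \<and> 0 \<in> I \<and> (\<forall>a\<in>I. \<forall>b\<in>I. a - b \<in> I) \<and>
     (\<forall>x\<in>M. \<forall>g\<in>G. \<forall>a\<in>I. gtp mul x g a \<in> I \<and> gtp mul a g x \<in> I)"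

definition gprime_ideal :: "('a::ab_group_add \<Rightarrow> 'a \<Rightarrow> 'a) \<Rightarrow> 'a set \<Rightarrow> 'a set \<Rightarrow> 'a set \<Rightarrow> bool" where
  "gprime_ideal mul M G P \<longleftrightarrow> gideal mul M G P \<and> P \<noteq> M \<and>
     (\<forall>U V. gideal mul M G U \<and> gideal mul M G V \<and>
        (\<forall>u\<in>U. \<forall>g\<in>G. \<forall>v\<in>V. gtp mul u g v \<in> P) \<longrightarrow> U \<subseteq> P \<or> V \<subseteq> P)"

text \<open>Baer (prime) radical: intersection of all prime ideals (M if there are none).\<close>
definition baer_radical :: "('a::ab_group_add \<Rightarrow> 'a \<Rightarrow> 'a) \<Rightarrow> 'a set \<Rightarrow> 'a set \<Rightarrow> 'a set" where
  "baer_radical mul M G = {x \<in> M. \<forall>P. gprime_ideal mul M G P \<longrightarrow> x \<in> P}"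

definition ideal_sum :: "('a::ab_group_add \<Rightarrow> 'a \<Rightarrow> 'a) \<Rightarrow> 'a set \<Rightarrow> 'a set \<Rightarrow> ('a set \<Rightarrow> bool) \<Rightarrow> 'a set" where
  "ideal_sum mul M G Q = \<Inter>{J. gideal mul M G J \<and> \<Union>{I. gideal mul M G I \<and> Q I} \<subseteq> J}"

fun gpow :: "('a \<Rightarrow> 'a \<Rightarrow> 'a) \<Rightarrow> 'a \<Rightarrow> 'a \<Rightarrow> nat \<Rightarrow> 'a" where
  "gpow mul x g 0 = x"
| "gpow mul x g (Suc n) = gtp mul x g (gpow mul x g n)"

definition gnilpotent_elem :: "('a::ab_group_add \<Rightarrow> 'a \<Rightarrow> 'a) \<Rightarrow> 'a set \<Rightarrow> 'a \<Rightarrow> bool" where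
  "gnilpotent_elem mul G x \<longleftrightarrow> (\<forall>g\<in>G. \<exists>n. gpow mul x g n = 0)"

definition nil_radical :: "('a::ab_group_add \<Rightarrow> 'a \<Rightarrow> 'a) \<Rightarrow> 'a set \<Rightarrow> 'a set \<Rightarrow> 'a set" where
  "nil_radical mul M G = ideal_sum mul M G (\<lambda>I. \<forall>x\<in>I. gnilpotent_elem mul G x)"

fun gprods :: "('a \<Rightarrow> 'a \<Rightarrow> 'a) \<Rightarrow> 'a set \<Rightarrow> 'a set \<Rightarrow> nat \<Rightarrow> 'a set" where
  "gprods mul G F 0 = F"
| "gprods mul G F (Suc n) = {gtp mul f g p | f g p. f \<in> F \<and> g \<in> G \<and> p \<in> gprods mul G F n}"

definition glocally_nilpotent :: "('a::ab_group_add \<Rightarrow> 'a \<Rightarrow> 'a) \<Rightarrow> 'a set \<Rightarrow> 'a set \<Rightarrow> bool" where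
  "glocally_nilpotent mul G S \<longleftrightarrow> (\<forall>F. finite F \<and> F \<subseteq> S \<longrightarrow> (\<exists>n. gprods mul G F n \<subseteq> {0}))"

definition levitzki_radical :: "('a::ab_group_add \<Rightarrow> 'a \<Rightarrow> 'a) \<Rightarrow> 'a set \<Rightarrow> 'a set \<Rightarrow> 'a set" where
  "levitzki_radical mul M G = ideal_sum mul M G (glocally_nilpotent mul G)"

definition prod_span :: "('a::ab_group_add \<Rightarrow> 'a \<Rightarrow> 'a) \<Rightarrow> 'a set \<Rightarrow> 'a set \<Rightarrow> 'a set" where
  "prod_span mul M G = {sum_list (map (\<lambda>(x, g). mul x g) l) | l. set l \<subseteq> M \<times> G}"

definition grqr :: "('a::ab_group_add \<Rightarrow> 'a \<Rightarrow> 'a) \<Rightarrow> 'a set \<Rightarrow> 'a set \<Rightarrow> 'a \<Rightarrow> bool" where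
  "grqr mul M G y \<longleftrightarrow>
     (\<forall>g\<in>G. \<exists>u\<in>prod_span mul M G. mul (mul y g) u + mul y g + u = 0)"

definition jacobson_radical :: "('a::ab_group_add \<Rightarrow> 'a \<Rightarrow> 'a) \<Rightarrow> 'a set \<Rightarrow> 'a set \<Rightarrow> 'a set" where
  "jacobson_radical mul M G = ideal_sum mul M G (\<lambda>I. \<forall>y\<in>I. grqr mul M G y)"

datatype radkind = Baer | Nil | Levitzki | Jacobson

fun gradical :: "radkind \<Rightarrow> ('a::ab_group_add \<Rightarrow> 'a \<Rightarrow> 'a) \<Rightarrow> 'a set \<Rightarrow> 'a set \<Rightarrow> 'a set" where
  "gradical Baer = baer_radical"
| "gradical Nil = nil_radical"
| "gradical Levitzki = levitzki_radical"
| "gradical Jacobson = jacobson_radical"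

text \<open>A quiver: vertices of type 'v, arrows of type 'e, source/target maps.
A path is (start vertex, list of arrows); the empty list is the trivial path.\<close>

fun chain :: "('e \<Rightarrow> 'v) \<Rightarrow> ('e \<Rightarrow> 'v) \<Rightarrow> 'e list \<Rightarrow> bool" where
  "chain src tgt [] = True"
| "chain src tgt [e] = True"
| "chain src tgt (e # e' # es) = (tgt e = src e' \<and> chain src tgt (e' # es))"

definition pend :: "('e \<Rightarrow> 'v) \<Rightarrow> 'v \<times> 'e list \<Rightarrow> 'v" where
  "pend tgt p = (if snd p = [] then fst p else tgt (last (snd p)))"

definition is_path :: "('e \<Rightarrow> 'v) \<Rightarrow> ('e \<Rightarrow> 'v) \<Rightarrow> 'v \<Rightarrow> 'v \<Rightarrow> 'v \<times> 'e list \<Rightarrow> bool" where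
  "is_path src tgt i j p \<longleftrightarrow> fst p = i \<and> chain src tgt (snd p) \<and>
     (snd p \<noteq> [] \<longrightarrow> src (hd (snd p)) = i) \<and> pend tgt p = j"

text \<open>A_ij: the k-span of paths from i to j (finitely supported coefficient functions).\<close>
definition path_space :: "('e \<Rightarrow> 'v) \<Rightarrow> ('e \<Rightarrow> 'v) \<Rightarrow> 'v \<Rightarrow> 'v \<Rightarrow> ('v \<times> 'e list \<Rightarrow> 'k::field) set" where
  "path_space src tgt i j = {f. finite {p. f p \<noteq> 0} \<and> (\<forall>p. f p \<noteq> 0 \<longrightarrow> is_path src tgt i j p)}"

text \<open>Multiplication in kD: bilinear extension of concatenation (p then q).\<close>
definition pmul :: "('e \<Rightarrow> 'v) \<Rightarrow> ('v \<times> 'e list \<Rightarrow> 'k::field) \<Rightarrow> ('v \<times> 'e list \<Rightarrow> 'k) \<Rightarrow> ('v \<times> 'e list \<Rightarrow> 'k)" where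
  "pmul tgt f g = (\<lambda>w. \<Sum>a\<in>{a. f a \<noteq> 0}. \<Sum>b\<in>{b. g b \<noteq> 0}.
      (if pend tgt a = fst b \<and> (fst a, snd a @ snd b) = w then f a * g b else 0))"

end

theory Submission
  imports Defs
begin


lemma pmul_zero_left[simp]: "pmul tgt 0 h = 0"
  unfolding pmul_def by (simp add: zero_fun_def)
lemma pmul_zero_right[simp]: "pmul tgt f 0 = 0"
  unfolding pmul_def by (simp add: zero_fun_def)

lemma ps_zero: "0 \<in> path_space src tgt i j"
  unfolding path_space_def by simp

lemma ps_add: "f \<in> path_space src tgt i j \<Longrightarrow> h \<in> path_space src tgt i j \<Longrightarrow> f + h \<in> path_space src tgt i j"
  unfolding path_space_def
proof (safe)
  assume "finite {p. f p \<noteq> 0}" "finite {p. h p \<noteq> 0}"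
  then show "finite {p. (f+h) p \<noteq> 0}"
    by (rule finite_subset[rotated, OF finite_UnI]) auto
qed (auto, metis add.right_neutral)

lemma ps_diff: "f \<in> path_space src tgt i j \<Longrightarrow> h \<in> path_space src tgt i j \<Longrightarrow> f - h \<in> path_space src tgt i j"
  unfolding path_space_def
proof (safe)
  assume "finite {p. f p \<noteq> 0}" "finite {p. h p \<noteq> 0}"
  then show "finite {p. (f-h) p \<noteq> 0}"
    by (rule finite_subset[rotated, OF finite_UnI]) auto
qed (auto, metis diff_zero)

lemma chain_append: "chain src tgt la \<Longrightarrow> chain src tgt lb \<Longrightarrow>
   (la \<noteq> [] \<Longrightarrow> lb \<noteq> [] \<Longrightarrow> tgt (last la) = src (hd lb)) \<Longrightarrow> chain src tgt (la @ lb)"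
proof (induction src tgt la rule: chain.induct)
  case (2 src tgt e)
  then show ?case by (cases lb) auto
qed auto

lemma is_path_append: "is_path src tgt i j a \<Longrightarrow> is_path src tgt j l b \<Longrightarrow>
   is_path src tgt i l (fst a, snd a @ snd b)"
proof -
  assume A: "is_path src tgt i j a" and B: "is_path src tgt j l b"
  have a1: "fst a = i" "chain src tgt (snd a)" "snd a \<noteq> [] \<Longrightarrow> src (hd (snd a)) = i"
    "pend tgt a = j" using A unfolding is_path_def by auto
  have b1: "fst b = j" "chain src tgt (snd b)" "snd b \<noteq> [] \<Longrightarrow> src (hd (snd b)) = j"
    "pend tgt b = l" using B unfolding is_path_def by auto
  have ta: "snd a \<noteq> [] \<Longrightarrow> tgt (last (snd a)) = j" using a1(4) unfolding pend_def by simp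
  have ea: "snd a = [] \<Longrightarrow> i = j" using a1(1,4) unfolding pend_def by simp
  have eb: "snd b = [] \<Longrightarrow> j = l" using b1(1,4) unfolding pend_def by simp
  have ch: "chain src tgt (snd a @ snd b)"
    using a1(2) b1(2) by (rule chain_append) (use ta b1(3) in simp)
  have hd: "snd a @ snd b \<noteq> [] \<Longrightarrow> src (hd (snd a @ snd b)) = i"
    using a1(3) b1(3) ea by (cases "snd a = []") simp_all
  have pe: "pend tgt (fst a, snd a @ snd b) = l"
  proof (cases "snd b = []")
    case True
    then show ?thesis using a1(4) eb unfolding pend_def by (simp split: if_splits)
  next
    case False
    then show ?thesis using b1(4) unfolding pend_def by simp
  qed
  show ?thesis unfolding is_path_def fst_conv snd_conv using a1(1) ch hd pe by blast
qed

lemma pmul_support: "pmul tgt f h w \<noteq> 0 \<Longrightarrow> \<exists>a b. f a \<noteq> 0 \<and> h b \<noteq> 0 \<and> pend tgt a = fst b \<and> w = (fst a, snd a @ snd b)"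
proof (rule ccontr)
  assume nz: "pmul tgt f h w \<noteq> 0" and "\<not> (\<exists>a b. f a \<noteq> 0 \<and> h b \<noteq> 0 \<and> pend tgt a = fst b \<and> w = (fst a, snd a @ snd b))"
  then have "\<And>a b. f a \<noteq> 0 \<Longrightarrow> h b \<noteq> 0 \<Longrightarrow> \<not> (pend tgt a = fst b \<and> (fst a, snd a @ snd b) = w)"
    by metis
  then have "pmul tgt f h w = 0" unfolding pmul_def by (intro sum.neutral ballI) simp
  then show False using nz by simp
qed

lemma ps_mul: assumes "f \<in> path_space src tgt i j" "h \<in> path_space src tgt j l"
  shows "pmul tgt f h \<in> path_space src tgt i l"
proof -
  have sub: "{w. pmul tgt f h w \<noteq> 0} \<subseteq> (\<lambda>(a,b). (fst a, snd a @ snd b)) ` ({a. f a \<noteq> 0} \<times> {b. h b \<noteq> 0})"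
    using pmul_support[of tgt f h] by fastforce
  have "finite {w. pmul tgt f h w \<noteq> 0}"
    using assms unfolding path_space_def by (intro finite_subset[OF sub]) auto
  moreover have "is_path src tgt i l w" if "pmul tgt f h w \<noteq> 0" for w
    using pmul_support[OF that] assms unfolding path_space_def
    by (metis (mono_tags, lifting) is_path_append mem_Collect_eq)
  ultimately show ?thesis unfolding path_space_def by auto
qed

lemma dsum_delta: assumes "finite A" "finite B"
  "\<And>a b. a \<in> A \<Longrightarrow> b \<in> B \<Longrightarrow> P a b \<longleftrightarrow> a = a0 \<and> b = b0"
  shows "(\<Sum>a\<in>A. \<Sum>b\<in>B. if P a b then F a b else 0) = (if a0 \<in> A \<and> b0 \<in> B then F a0 b0 else 0)"
proof -
  have "(\<Sum>a\<in>A. \<Sum>b\<in>B. if P a b then F a b else 0) = (\<Sum>a\<in>A. if a = a0 then (\<Sum>b\<in>B. if b = b0 then F a0 b else 0) else 0)"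
    by (rule sum.cong[OF refl]) (auto simp: assms(3) intro!: sum.cong)
  also have "\<dots> = (if a0 \<in> A \<and> b0 \<in> B then F a0 b0 else 0)"
    using assms(1,2) by (simp add: sum.delta)
  finally show ?thesis .
qed

lemma eps: assumes "finite {p. f p \<noteq> 0}" "finite {p. h p \<noteq> 0}"
  shows "pmul tgt f h (i, []) = f (i, []) * h (i, [])"
proof -
  have "pmul tgt f h (i, []) = (if (i,[]) \<in> {a. f a \<noteq> 0} \<and> (i,[]) \<in> {b. h b \<noteq> 0} then f (i,[]) * h (i,[]) else 0)"
    unfolding pmul_def
    by (rule dsum_delta[OF assms]) (auto simp: pend_def prod_eq_iff)
  then show ?thesis by auto
qed



definition dg :: "('v \<times> 'e list \<Rightarrow> 'k::zero) \<Rightarrow> nat" where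
  "dg f = Max ((\<lambda>p. length (snd p)) ` {p. f p \<noteq> 0})"

lemma supp_ne: "f \<noteq> 0 \<Longrightarrow> {p. f p \<noteq> 0} \<noteq> {}"
  by (auto simp: fun_eq_iff)

lemma dg_ge: "finite {p. f p \<noteq> 0} \<Longrightarrow> f w \<noteq> 0 \<Longrightarrow> length (snd w) \<le> dg f"
  unfolding dg_def by (rule Max_ge) auto

lemma dg_obtain: assumes "finite {p. f p \<noteq> 0}" "f \<noteq> 0"
  obtains a where "f a \<noteq> 0" "length (snd a) = dg f"
proof -
  have "dg f \<in> (\<lambda>p. length (snd p)) ` {p. f p \<noteq> 0}"
    unfolding dg_def using assms supp_ne[OF assms(2)] by (intro Max_in) auto
  then show ?thesis using that by auto
qed

lemma top: assumes f: "f \<in> path_space src tgt i j" and h: "h \<in> path_space src tgt j l"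
  and "f \<noteq> 0" "h \<noteq> 0"
  shows "\<exists>w. pmul tgt f h w \<noteq> 0 \<and> length (snd w) = dg f + dg h"
proof -
  have ff: "finite {p. f p \<noteq> 0}" and fh: "finite {p. h p \<noteq> 0}"
    and pf: "\<And>p. f p \<noteq> 0 \<Longrightarrow> is_path src tgt i j p"
    and ph: "\<And>p. h p \<noteq> 0 \<Longrightarrow> is_path src tgt j l p"
    using f h unfolding path_space_def by auto
  obtain a0 where a0: "f a0 \<noteq> 0" "length (snd a0) = dg f" using dg_obtain[OF ff \<open>f \<noteq> 0\<close>] by blast
  obtain b0 where b0: "h b0 \<noteq> 0" "length (snd b0) = dg h" using dg_obtain[OF fh \<open>h \<noteq> 0\<close>] by blast
  define w where "w = (i, snd a0 @ snd b0)"
  have key: "(pend tgt a = fst b \<and> (fst a, snd a @ snd b) = w) \<longleftrightarrow> a = a0 \<and> b = b0"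
    if "a \<in> {a. f a \<noteq> 0}" "b \<in> {b. h b \<noteq> 0}" for a b
  proof
    assume c: "pend tgt a = fst b \<and> (fst a, snd a @ snd b) = w"
    have la: "length (snd a) \<le> length (snd a0)" using dg_ge[OF ff] that a0 by auto
    have lb: "length (snd b) \<le> length (snd b0)" using dg_ge[OF fh] that b0 by auto
    have e: "snd a @ snd b = snd a0 @ snd b0" using c w_def by auto
    then have "length (snd a) + length (snd b) = length (snd a0) + length (snd b0)"
      by (metis length_append)
    then have "length (snd a) = length (snd a0)" using la lb by linarith
    then have "snd a = snd a0 \<and> snd b = snd b0" using e by (simp add: append_eq_append_conv)
    moreover have "fst a = fst a0" using c w_def pf[of a0] a0 by (auto simp: is_path_def)
    moreover have "fst b = fst b0" using c pf[of a] ph[of b0] that b0 by (auto simp: is_path_def)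
    ultimately show "a = a0 \<and> b = b0" by (simp add: prod_eq_iff)
  next
    assume "a = a0 \<and> b = b0"
    then show "pend tgt a = fst b \<and> (fst a, snd a @ snd b) = w"
      using pf[of a0] ph[of b0] a0 b0 w_def by (auto simp: is_path_def)
  qed
  have "pmul tgt f h w = (if a0 \<in> {a. f a \<noteq> 0} \<and> b0 \<in> {b. h b \<noteq> 0} then f a0 * h b0 else 0)"
    unfolding pmul_def by (rule dsum_delta[OF ff fh key])
  then have "pmul tgt f h w \<noteq> 0" using a0 b0 by simp
  then show ?thesis using a0 b0 w_def by (intro exI[of _ w]) auto
qed

definition dl :: "'v \<times> 'e list \<Rightarrow> ('v \<times> 'e list \<Rightarrow> 'k::field)" where
  "dl p = (\<lambda>w. if w = p then 1 else 0)"

lemma dl_ps: fixes p :: "'v \<times> 'e list"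
  assumes "is_path src tgt i j p" shows "(dl p :: 'v \<times> 'e list \<Rightarrow> 'k::field) \<in> path_space src tgt i j"
proof -
  have "{w. (dl p w :: 'k) \<noteq> 0} = {p}" by (auto simp: dl_def)
  moreover have "\<forall>w. dl p w \<noteq> 0 \<longrightarrow> is_path src tgt i j w" using assms by (simp add: dl_def)
  ultimately show ?thesis unfolding path_space_def by simp
qed

lemma dl_nz: fixes p :: "'v \<times> 'e list" shows "(dl p :: _ \<Rightarrow> 'k::field) \<noteq> 0"
proof
  assume "(dl p :: _ \<Rightarrow> 'k::field) = 0"
  then have "(dl p p :: 'k) = 0" by simp
  then show False by (simp add: dl_def)
qed

lemma nz_mul: assumes "f \<in> path_space src tgt i j" "h \<in> path_space src tgt j l"
  "f \<noteq> 0" "h \<noteq> 0" shows "pmul tgt f h \<noteq> 0"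
  using top[OF assms] by auto

lemma KL: assumes "x \<in> path_space src tgt s t" "y \<in> path_space src tgt s t" "x \<noteq> 0" "y \<noteq> 0"
  "is_path src tgt t s p"
  shows "pmul tgt (pmul tgt x (dl p)) y \<noteq> 0 \<and> pmul tgt (pmul tgt x (dl p)) y \<in> path_space src tgt s t"
proof -
  have 1: "pmul tgt x (dl p) \<in> path_space src tgt s s" by (rule ps_mul[OF assms(1) dl_ps[OF assms(5)]])
  have 2: "pmul tgt x (dl p) \<noteq> 0" by (rule nz_mul[OF assms(1) dl_ps[OF assms(5)] assms(3) dl_nz])
  show ?thesis using nz_mul[OF 1 assms(2) 2 assms(4)] ps_mul[OF 1 assms(2)] by auto
qed

lemma gpow_nz: assumes "x \<in> path_space src tgt s t" "x \<noteq> 0" "is_path src tgt t s p"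
  shows "gpow (pmul tgt) x (dl p) n \<in> path_space src tgt s t \<and> gpow (pmul tgt) x (dl p) n \<noteq> 0"
proof (induction n)
  case 0
  show ?case by (simp only: gpow.simps) (use assms in blast)
next
  case (Suc n)
  then show ?case using KL[OF assms(1) _ assms(2) _ assms(3), of "gpow (pmul tgt) x (dl p) n"]
    by (simp only: gpow.simps gtp_def) blast
qed

lemma gpow_gprods: "x \<in> F \<Longrightarrow> g \<in> G \<Longrightarrow> gpow mul x g n \<in> gprods mul G F n"
  by (induction n) auto

lemma ps_sum_list: "set l \<subseteq> path_space src tgt s t \<times> path_space src tgt t s \<Longrightarrow>
   sum_list (map (\<lambda>(x, g). pmul tgt x g) l) \<in> path_space src tgt s s"
  by (induction l) (auto intro: ps_add ps_mul ps_zero)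

lemma prod_span_ps: "prod_span (pmul tgt) (path_space src tgt s t) (path_space src tgt t s) \<subseteq> path_space src tgt s s"
proof
  fix x assume "x \<in> prod_span (pmul tgt) (path_space src tgt s t) (path_space src tgt t s)"
  then obtain l where "x = sum_list (map (\<lambda>(x, g). pmul tgt x g) l)"
    "set l \<subseteq> path_space src tgt s t \<times> path_space src tgt t s"
    unfolding prod_span_def by blast
  then show "x \<in> path_space src tgt s s" using ps_sum_list by simp
qed

lemma ps_fin: "f \<in> path_space src tgt i j \<Longrightarrow> finite {p. f p \<noteq> 0}"
  unfolding path_space_def by auto

lemma ps_pos: assumes "f \<in> path_space src tgt i j" "f (i, []) = 0" "f w \<noteq> 0"
  shows "length (snd w) \<ge> 1"
proof (rule ccontr)
  assume "\<not> ?thesis"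
  then have "snd w = []" by (cases "snd w") auto
  moreover have "is_path src tgt i j w" using assms(1,3) unfolding path_space_def by blast
  then have "fst w = i" by (simp add: is_path_def)
  ultimately have "w = (i, [])" by (simp add: prod_eq_iff)
  then show False using assms by simp
qed

lemma jac1: assumes y: "y \<in> path_space src tgt s t" "y \<noteq> 0" and p: "is_path src tgt t s p" "snd p \<noteq> []"
  and u: "u \<in> path_space src tgt s s"
  shows "pmul tgt (pmul tgt y (dl p)) u + pmul tgt y (dl p) + u \<noteq> 0"
proof
  define z where "z = pmul tgt y (dl p)"
  assume eq0: "pmul tgt (pmul tgt y (dl p)) u + pmul tgt y (dl p) + u = 0"
  then have eq: "pmul tgt z u + z + u = 0" using z_def by simp
  have zps: "z \<in> path_space src tgt s s" unfolding z_def by (rule ps_mul[OF y(1) dl_ps[OF p(1)]])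
  have znz: "z \<noteq> 0" unfolding z_def by (rule nz_mul[OF y(1) dl_ps[OF p(1)] y(2) dl_nz])
  have "z (s, []) = y (s, []) * dl p (s, [])" unfolding z_def
    by (rule eps[OF ps_fin[OF y(1)] ps_fin[OF dl_ps[OF p(1)]]])
  then have z0: "z (s, []) = 0" using p(2) by (auto simp: dl_def)
  have "(pmul tgt z u + z + u) (s, []) = 0" using eq by simp
  then have u0: "u (s, []) = 0" using eps[OF ps_fin[OF zps] ps_fin[OF u], of tgt s] z0 by simp
  show False
  proof (cases "u = 0")
    case True
    then show ?thesis using eq znz by simp
  next
    case False
    obtain w where w: "pmul tgt z u w \<noteq> 0" "length (snd w) = dg z + dg u"
      using top[OF zps u znz False] by blast
    obtain a where "z a \<noteq> 0" "length (snd a) = dg z" using dg_obtain[OF ps_fin[OF zps] znz] by blast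
    then have dz: "dg z \<ge> 1" using ps_pos[OF zps z0] by metis
    obtain b where "u b \<noteq> 0" "length (snd b) = dg u" using dg_obtain[OF ps_fin[OF u] False] by blast
    then have du: "dg u \<ge> 1" using ps_pos[OF u u0] by metis
    have "z w = 0" using dg_ge[OF ps_fin[OF zps], of w] w(2) du by fastforce
    moreover have "u w = 0" using dg_ge[OF ps_fin[OF u], of w] w(2) dz by fastforce
    moreover have "(pmul tgt z u + z + u) w = 0" using eq by simp
    ultimately show False using w(1) by simp
  qed
qed

lemma jac2: assumes y: "y \<in> path_space src tgt s s" "y \<noteq> 0"
  and triv: "\<And>p. is_path src tgt s s p \<Longrightarrow> snd p = []"
  and u: "u \<in> path_space src tgt s s"
  defines "g \<equiv> (\<lambda>w. if w = (s, []) then - 1 / y (s, []) else 0)"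
  shows "g \<in> path_space src tgt s s \<and> pmul tgt (pmul tgt y g) u + pmul tgt y g + u \<noteq> 0"
proof -
  have sp: "is_path src tgt s s (s, [])" by (simp add: is_path_def pend_def)
  have gps: "g \<in> path_space src tgt s s"
    unfolding g_def path_space_def using sp by auto
  have "y (s, []) \<noteq> 0"
  proof
    assume y0: "y (s, []) = 0"
    obtain w where "y w \<noteq> 0" using y(2) by (auto simp: fun_eq_iff)
    then have "is_path src tgt s s w" using y(1) unfolding path_space_def by blast
    then have "snd w = []" "fst w = s" using triv[of w] unfolding is_path_def by simp_all
    then have "w = (s, [])" by (simp add: prod_eq_iff)
    then show False using y0 \<open>y w \<noteq> 0\<close> by simp
  qed
  have yg: "pmul tgt y g (s, []) = -1"
    using eps[OF ps_fin[OF y(1)] ps_fin[OF gps], of tgt s] \<open>y (s, []) \<noteq> 0\<close> by (simp add: g_def)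
  have "(pmul tgt (pmul tgt y g) u + pmul tgt y g + u) (s, []) = -1"
    using eps[OF ps_fin[OF ps_mul[OF y(1) gps]] ps_fin[OF u], of tgt s] yg by simp
  moreover have "(pmul tgt (pmul tgt y g) u + pmul tgt y g + u) (s, []) = 0"
    if "pmul tgt (pmul tgt y g) u + pmul tgt y g + u = 0" using that by simp
  ultimately show ?thesis using gps by force
qed



lemma gideal_zero: "0 \<in> M \<Longrightarrow> gideal (pmul tgt) M G {0}"
  unfolding gideal_def by (simp add: gtp_def)

lemma ideal_sum_zero: assumes "gideal mul M G {0}" "\<And>I. gideal mul M G I \<Longrightarrow> Q I \<Longrightarrow> I \<subseteq> {0}"
  shows "ideal_sum mul M G Q = {0}"
proof
  have "\<Union>{I. gideal mul M G I \<and> Q I} \<subseteq> {0}" using assms(2) by blast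
  then have "{0} \<in> {J. gideal mul M G J \<and> \<Union>{I. gideal mul M G I \<and> Q I} \<subseteq> J}" using assms(1) by simp
  then show "ideal_sum mul M G Q \<subseteq> {0}" unfolding ideal_sum_def by (rule Inter_lower)
  show "{0} \<subseteq> ideal_sum mul M G Q" unfolding ideal_sum_def gideal_def by auto
qed

lemma ideal_sum_full: assumes "gideal mul M G M" "Q M"
  shows "ideal_sum mul M G Q = M"
proof
  have "\<Union>{I. gideal mul M G I \<and> Q I} \<subseteq> M" unfolding gideal_def by blast
  then have "M \<in> {J. gideal mul M G J \<and> \<Union>{I. gideal mul M G I \<and> Q I} \<subseteq> J}" using assms(1) by simp
  then show "ideal_sum mul M G Q \<subseteq> M" unfolding ideal_sum_def by (rule Inter_lower)
  have "M \<subseteq> J" if "gideal mul M G J \<and> \<Union>{I. gideal mul M G I \<and> Q I} \<subseteq> J" for J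
    using that assms by blast
  then show "M \<subseteq> ideal_sum mul M G Q" unfolding ideal_sum_def by blast
qed

lemma case_zero:
  fixes src tgt :: "'e \<Rightarrow> 'v" and s t :: 'v
  defines "M \<equiv> (path_space src tgt s t :: ('v \<times> 'e list \<Rightarrow> 'k::field) set)"
  defines "G \<equiv> (path_space src tgt t s :: ('v \<times> 'e list \<Rightarrow> 'k::field) set)"
  assumes G0: "G = {0}"
  shows "gradical r (pmul tgt) M G = M"
proof -
  have gm: "gideal (pmul tgt) M G M"
    unfolding gideal_def M_def using G0 ps_diff ps_zero
    by (auto simp: gtp_def M_def)
  show ?thesis
  proof (cases r)
    case Baer
    have "\<not> gprime_ideal (pmul tgt) M G P" for P
    proof
      assume P: "gprime_ideal (pmul tgt) M G P"
      then have "0 \<in> P" "P \<subseteq> M" "P \<noteq> M" unfolding gprime_ideal_def gideal_def by auto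
      moreover have "M \<subseteq> P"
        using P gm \<open>0 \<in> P\<close> G0 unfolding gprime_ideal_def by (auto simp: gtp_def)
      ultimately show False by blast
    qed
    then show ?thesis using Baer by (simp add: baer_radical_def)
  next
    case Nil
    have "gnilpotent_elem (pmul tgt) G x" for x
      unfolding gnilpotent_elem_def using G0
      by (auto intro!: exI[of _ "Suc 0"] simp: gtp_def)
    then show ?thesis using Nil by (simp add: nil_radical_def ideal_sum_full[OF gm])
  next
    case Levitzki
    have "glocally_nilpotent (pmul tgt) G M"
      unfolding glocally_nilpotent_def using G0
      by (auto intro!: exI[of _ "Suc 0"] simp: gtp_def)
    then show ?thesis using Levitzki by (simp add: levitzki_radical_def ideal_sum_full[OF gm])
  next
    case Jacobson
    have "0 \<in> prod_span (pmul tgt) M G" unfolding prod_span_def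
      by (auto intro!: exI[of _ "[]"])
    then have "grqr (pmul tgt) M G y" for y
      unfolding grqr_def using G0 by auto
    then show ?thesis using Jacobson by (simp add: jacobson_radical_def ideal_sum_full[OF gm])
  qed
qed

lemma case_nonzero:
  fixes src tgt :: "'e \<Rightarrow> 'v" and s t :: 'v
  defines "M \<equiv> (path_space src tgt s t :: ('v \<times> 'e list \<Rightarrow> 'k::field) set)"
  defines "G \<equiv> (path_space src tgt t s :: ('v \<times> 'e list \<Rightarrow> 'k::field) set)"
  assumes M0: "M \<noteq> {0}" and G0: "G \<noteq> {0}"
  shows "gradical r (pmul tgt) M G = {0}"
proof -
  have "0 \<in> G" unfolding G_def by (rule ps_zero)
  then obtain g0 where "g0 \<in> G" "g0 \<noteq> 0" using G0 by blast
  then obtain p where "g0 p \<noteq> 0" using supp_ne[of g0] by blast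
  then have p: "is_path src tgt t s p" using \<open>g0 \<in> G\<close> unfolding G_def path_space_def by blast
  have dlG: "dl p \<in> G" unfolding G_def by (rule dl_ps[OF p])
  have gz: "gideal (pmul tgt) M G {0}" unfolding M_def by (rule gideal_zero[OF ps_zero])
  show ?thesis
  proof (cases r)
    case Baer
    have "gprime_ideal (pmul tgt) M G {0}"
      unfolding gprime_ideal_def
    proof (intro conjI gz allI impI)
      show "{0} \<noteq> M" using M0 by auto
      fix U V
      assume a: "gideal (pmul tgt) M G U \<and> gideal (pmul tgt) M G V \<and>
          (\<forall>u\<in>U. \<forall>g\<in>G. \<forall>v\<in>V. gtp (pmul tgt) u g v \<in> {0})"
      show "U \<subseteq> {0} \<or> V \<subseteq> {0}"
      proof (rule ccontr)
        assume "\<not> ?thesis"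
        then obtain u v where "u \<in> U" "u \<noteq> 0" "v \<in> V" "v \<noteq> 0" by blast
        moreover have "U \<subseteq> M" "V \<subseteq> M" using a unfolding gideal_def by auto
        ultimately show False using KL[of u src tgt s t v p] p a dlG unfolding M_def
          by (auto simp: gtp_def)
      qed
    qed
    then have "baer_radical (pmul tgt) M G \<subseteq> {0}" unfolding baer_radical_def by blast
    moreover have "0 \<in> baer_radical (pmul tgt) M G"
    proof -
      have "0 \<in> M" unfolding M_def by (rule ps_zero)
      moreover have "0 \<in> P" if "gprime_ideal (pmul tgt) M G P" for P
        using that unfolding gprime_ideal_def gideal_def by blast
      ultimately show ?thesis unfolding baer_radical_def by blast
    qed
    ultimately show ?thesis using Baer by auto
  next
    case Nil
    have "I \<subseteq> {0}" if I1: "gideal (pmul tgt) M G I" and I2: "\<forall>x\<in>I. gnilpotent_elem (pmul tgt) G x" for I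
    proof
      fix x assume "x \<in> I"
      then have "x \<in> M" using that unfolding gideal_def by auto
      show "x \<in> {0}"
      proof (rule ccontr)
        assume "x \<notin> {0}"
        then obtain n where "gpow (pmul tgt) x (dl p) n = 0"
          using I2 \<open>x \<in> I\<close> dlG unfolding gnilpotent_elem_def by blast
        then show False using gpow_nz[of x src tgt s t p n] \<open>x \<in> M\<close> \<open>x \<notin> {0}\<close> p
          unfolding M_def by auto
      qed
    qed
    then show ?thesis using Nil by (simp add: nil_radical_def ideal_sum_zero[OF gz])
  next
    case Levitzki
    have "I \<subseteq> {0}" if I1: "gideal (pmul tgt) M G I" and I2: "glocally_nilpotent (pmul tgt) G I" for I
    proof
      fix x assume "x \<in> I"
      then have "x \<in> M" using that unfolding gideal_def by auto
      show "x \<in> {0}"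
      proof (rule ccontr)
        assume "x \<notin> {0}"
        then obtain n where "gprods (pmul tgt) G {x} n \<subseteq> {0}"
          using I2 \<open>x \<in> I\<close> unfolding glocally_nilpotent_def
          by (meson empty_subsetI finite.emptyI finite_insert insert_subset)
        then have "gpow (pmul tgt) x (dl p) n = 0" using gpow_gprods[of x "{x}" "dl p" G "pmul tgt" n] dlG
          by auto
        then show False using gpow_nz[of x src tgt s t p n] \<open>x \<in> M\<close> \<open>x \<notin> {0}\<close> p
          unfolding M_def by auto
      qed
    qed
    then show ?thesis using Levitzki by (simp add: levitzki_radical_def ideal_sum_zero[OF gz])
  next
    case Jacobson
    have PSs: "prod_span (pmul tgt) M G \<subseteq> path_space src tgt s s"
      unfolding M_def G_def by (rule prod_span_ps)
    have "I \<subseteq> {0}" if I1: "gideal (pmul tgt) M G I" and I2: "\<forall>y\<in>I. grqr (pmul tgt) M G y" for I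
    proof
      fix y assume "y \<in> I"
      then have yM: "y \<in> M" using that unfolding gideal_def by auto
      have q: "grqr (pmul tgt) M G y" using I2 \<open>y \<in> I\<close> by auto
      show "y \<in> {0}"
      proof (rule ccontr)
        assume "y \<notin> {0}"
        then have ynz: "y \<noteq> 0" by auto
        show False
        proof (cases "\<exists>q. is_path src tgt t s q \<and> snd q \<noteq> []")
          case True
          then obtain q where q1: "is_path src tgt t s q" "snd q \<noteq> []" by blast
          have "dl q \<in> G" unfolding G_def by (rule dl_ps[OF q1(1)])
          then obtain u where "u \<in> prod_span (pmul tgt) M G"
            "pmul tgt (pmul tgt y (dl q)) u + pmul tgt y (dl q) + u = 0"
            using q unfolding grqr_def by blast
          then show False using jac1[OF yM[unfolded M_def] ynz q1] PSs by blast
        next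
          case False
          then have "snd p = []" using p by blast
          then have st: "s = t" using p by (auto simp: is_path_def pend_def)
          have triv: "\<And>q. is_path src tgt s s q \<Longrightarrow> snd q = []" using False st by blast
          define g :: "'v \<times> 'e list \<Rightarrow> 'k" where "g \<equiv> (\<lambda>w. if w = (s, []) then - 1 / y (s, []) else (0::'k))"
          have yM': "y \<in> path_space src tgt s s" using yM st unfolding M_def by simp
          have GG: "G = path_space src tgt s s" using st unfolding G_def by simp
          have MG: "M = path_space src tgt s s" using st unfolding M_def by simp
          have j0: "g \<in> path_space src tgt s s"
            using jac2[OF yM' ynz triv ps_zero] unfolding g_def by blast
          then have "g \<in> G" using GG by simp
          then obtain u where u1: "u \<in> prod_span (pmul tgt) M G"
            and u2: "pmul tgt (pmul tgt y g) u + pmul tgt y g + u = 0"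
            using q unfolding grqr_def by blast
          have "u \<in> path_space src tgt s s" using u1 PSs by blast
          then show False
            using jac2[OF yM' ynz triv, of u] u2 unfolding g_def by blast
        qed
      qed
    qed
    then show ?thesis using Jacobson by (simp add: jacobson_radical_def ideal_sum_zero[OF gz])
  qed
qed

theorem lemma3p1:
  fixes src tgt :: "'e \<Rightarrow> 'v" and s t :: 'v and r :: radkind
  assumes "path_space src tgt s t \<noteq> ({0} :: ('v \<times> 'e list \<Rightarrow> 'k::field) set)"
  shows "(gradical r (pmul tgt) (path_space src tgt s t) (path_space src tgt t s)
            = ({0} :: ('v \<times> 'e list \<Rightarrow> 'k) set)
          \<longleftrightarrow> path_space src tgt t s \<noteq> ({0} :: ('v \<times> 'e list \<Rightarrow> 'k) set))
       \<and> (gradical r (pmul tgt) (path_space src tgt s t) (path_space src tgt t s)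
            = (path_space src tgt s t :: ('v \<times> 'e list \<Rightarrow> 'k) set)
          \<longleftrightarrow> path_space src tgt t s = ({0} :: ('v \<times> 'e list \<Rightarrow> 'k) set))"
proof (cases "path_space src tgt t s = ({0} :: ('v \<times> 'e list \<Rightarrow> 'k) set)")
  case True
  then show ?thesis using case_zero[OF True, of r] assms by auto
next
  case False
  then show ?thesis using case_nonzero[OF assms False, of r] assms by auto
qed

end
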